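(* Let $\varGamma=\sum_{j=1}^N\mathrm{graph}(g_j)$, where $g_1,\dots,g_N$ are rational maps (not necessarily distinct), and put $D=d_1(\varGamma)=\sum_j\deg g_j$. For every $n\in\mathbb{Z}_+$, the number of repelling fixed points of $\varGamma^{\circ n}$, counted according to multiplicity, is at most $D^n+N^n$.
   Context: The $n$-th iterate is $\varGamma^{\circ n}=\sum_{(j_1,\dots,j_n)}\mathrm{graph}(g_{j_n}\circ\cdots\circ g_{j_1})$. A point $x$ is a repelling fixed point of $\varGamma^{\circ n}$ if it is a repelling fixed point of some $g_{j_n}\circ\cdots\circ g_{j_1}$. Its multiplicity is the number of index sequences $(j_1,\dots,j_n)$ for which this holds. *)

theory Defs
  imports "HOL-Analysis.Analysis" "HOL-Computational_Algebra.Polynomial"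
begin

text \<open>The Riemann sphere is modelled as complex option: Some z is the finite
point z, None is the point at infinity.\<close>

type_synonym sphere = "complex option"

definition rat_eval :: "complex poly \<Rightarrow> complex poly \<Rightarrow> sphere \<Rightarrow> sphere" where
  "rat_eval p q x = (case x of
     Some z \<Rightarrow> (if poly q z = 0 then None else Some (poly p z / poly q z))
   | None \<Rightarrow> (let d = max (degree p) (degree q) in
              if coeff q d = 0 then None else Some (coeff p d / coeff q d)))"

definition rat_degree :: "complex poly \<Rightarrow> complex poly \<Rightarrow> nat" where
  "rat_degree p q = max (degree p) (degree q)"

text \<open>Standard local coordinates of the sphere centred at a point x:
  the identity chart near a finite point, and w = 1/z near infinity.\<close>
definition to_coord :: "sphere \<Rightarrow> sphere \<Rightarrow> complex" where
  "to_coord x y = (case x of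
      Some _ \<Rightarrow> (case y of Some v \<Rightarrow> v | None \<Rightarrow> 0)
    | None \<Rightarrow> (case y of Some v \<Rightarrow> 1 / v | None \<Rightarrow> 0))"

definition from_coord :: "sphere \<Rightarrow> complex \<Rightarrow> sphere" where
  "from_coord x w = (case x of
      Some _ \<Rightarrow> Some w
    | None \<Rightarrow> (if w = 0 then None else Some (1 / w)))"

definition repelling_fixed_point :: "(sphere \<Rightarrow> sphere) \<Rightarrow> sphere \<Rightarrow> bool" where
  "repelling_fixed_point f x \<longleftrightarrow> f x = x \<and>
     (\<exists>m. ((\<lambda>w. to_coord x (f (from_coord x w))) has_field_derivative m) (at (to_coord x x))
          \<and> norm m > 1)"

text \<open>For js = [j1,...,jn], compose g js = g jn o ... o g j1.\<close>
definition compose_seq :: "(nat \<Rightarrow> sphere \<Rightarrow> sphere) \<Rightarrow> nat list \<Rightarrow> sphere \<Rightarrow> sphere" where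
  "compose_seq g js = fold (\<lambda>j h. g j \<circ> h) js id"

text \<open>Repelling fixed points of the n-th iterate of the correspondence
  sum_j graph(g_j), j < N, each paired with an index sequence realising it
  (so the cardinality counts them with multiplicity).\<close>
definition repelling_pts_mult :: "(nat \<Rightarrow> sphere \<Rightarrow> sphere) \<Rightarrow> nat \<Rightarrow> nat \<Rightarrow> (sphere \<times> nat list) set" where
  "repelling_pts_mult g N n = {(x, js). length js = n \<and> set js \<subseteq> {..<N}
       \<and> repelling_fixed_point (compose_seq g js) x}"

end

theory Submission
  imports Defs
begin

definition hom :: "nat \<Rightarrow> complex poly \<Rightarrow> complex \<Rightarrow> complex \<Rightarrow> complex" where
  "hom a f x y = (if y = 0 then coeff f a * x ^ a else y ^ a * poly f (x / y))"

definition sph :: "complex \<Rightarrow> complex \<Rightarrow> sphere" where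
  "sph x y = (if y = 0 then None else Some (x / y))"

definition repr :: "(sphere \<Rightarrow> sphere) \<Rightarrow> nat \<Rightarrow> complex poly \<Rightarrow> complex poly \<Rightarrow> bool" where
  "repr f d A B \<longleftrightarrow> degree A \<le> d \<and> degree B \<le> d \<and>
     (\<forall>x y. (x, y) \<noteq> (0, 0) \<longrightarrow> \<not> (hom d A x y = 0 \<and> hom d B x y = 0)
        \<and> f (sph x y) = sph (hom d A x y) (hom d B x y))"

lemma coeff_mult_le:
  fixes f g :: "complex poly"
  assumes "degree f \<le> a" "degree g \<le> b"
  shows "coeff (f * g) (a + b) = coeff f a * coeff g b"
proof (cases "degree f = a \<and> degree g = b")
  case True
  then show ?thesis using coeff_mult_degree_sum[of f g] by simp
next
  case False
  then have "degree f < a \<or> degree g < b" using assms by auto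
  moreover have "degree (f * g) \<le> degree f + degree g" by (rule degree_mult_le)
  ultimately have "degree (f * g) < a + b" using assms by linarith
  then have "coeff (f * g) (a + b) = 0" by (simp add: coeff_eq_0)
  moreover have "coeff f a * coeff g b = 0" using \<open>degree f < a \<or> degree g < b\<close>
    by (auto simp: coeff_eq_0)
  ultimately show ?thesis by simp
qed

lemma hom_mult:
  assumes "degree f \<le> a" "degree g \<le> b"
  shows "hom (a + b) (f * g) x y = hom a f x y * hom b g x y"
  using coeff_mult_le[OF assms] by (simp add: hom_def power_add)

lemma hom_add: "hom a (f + g) x y = hom a f x y + hom a g x y"
  by (simp add: hom_def algebra_simps)

lemma hom_zero: "hom a 0 x y = 0"
  by (simp add: hom_def)

lemma hom_smult: "hom a (smult c f) x y = c * hom a f x y"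
  by (simp add: hom_def algebra_simps)

lemma hom_const: "hom 0 [:c:] x y = c"
  by (simp add: hom_def)

lemma hom_one: "hom 0 1 x y = 1"
  by (simp add: hom_def)

lemma hom_pow:
  assumes "degree f \<le> a"
  shows "hom (a * k) (f ^ k) x y = (hom a f x y) ^ k"
proof (induction k)
  case 0
  then show ?case by (simp add: hom_one)
next
  case (Suc k)
  have d: "degree (f ^ k) \<le> a * k"
    using degree_power_le[of f k] assms by (metis dual_order.trans mult.commute mult_le_mono1)
  have "hom (a * Suc k) (f ^ Suc k) x y = hom (a + a * k) (f * f ^ k) x y" by simp
  also have "\<dots> = hom a f x y * hom (a * k) (f ^ k) x y" by (rule hom_mult[OF assms d])
  finally show ?case using Suc by simp
qed

lemma hom_sum: "finite S \<Longrightarrow> hom a (\<Sum>i\<in>S. F i) x y = (\<Sum>i\<in>S. hom a (F i) x y)"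
  by (induction S rule: finite_induct) (simp_all add: hom_zero hom_add)

lemma poly_altdef_le:
  fixes f :: "complex poly"
  assumes "degree f \<le> a"
  shows "poly f z = (\<Sum>i\<le>a. coeff f i * z ^ i)"
proof -
  have "poly f z = (\<Sum>i\<le>degree f. coeff f i * z ^ i)" by (rule poly_altdef)
  also have "\<dots> = (\<Sum>i\<le>a. coeff f i * z ^ i)"
    by (rule sum.mono_neutral_left) (use assms in \<open>auto simp: coeff_eq_0\<close>)
  finally show ?thesis .
qed

lemma hom_expand:
  assumes "degree f \<le> a"
  shows "hom a f u v = (\<Sum>i\<le>a. coeff f i * u ^ i * v ^ (a - i))"
proof (cases "v = 0")
  case True
  have "(\<Sum>i\<le>a. coeff f i * u ^ i * v ^ (a - i)) = (\<Sum>i\<in>{a}. coeff f i * u ^ i * v ^ (a - i))"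
    by (rule sum.mono_neutral_right) (use True in auto)
  then show ?thesis using True by (simp add: hom_def)
next
  case False
  have "hom a f u v = v ^ a * (\<Sum>i\<le>a. coeff f i * (u / v) ^ i)"
    using False poly_altdef_le[OF assms] by (simp add: hom_def)
  also have "\<dots> = (\<Sum>i\<le>a. coeff f i * u ^ i * v ^ (a - i))"
    unfolding sum_distrib_left
  proof (rule sum.cong)
    fix i assume "i \<in> {..a}"
    then have "v ^ a = v ^ i * v ^ (a - i)" by (simp add: power_add[symmetric])
    then show "v ^ a * (coeff f i * (u / v) ^ i) = coeff f i * u ^ i * v ^ (a - i)"
      using False by (simp add: power_divide field_simps)
  qed simp
  finally show ?thesis .
qed


definition cpoly :: "nat \<Rightarrow> complex poly \<Rightarrow> complex poly \<Rightarrow> complex poly \<Rightarrow> complex poly" where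
  "cpoly d2 H A1 B1 = (\<Sum>i\<le>d2. smult (coeff H i) (A1 ^ i * B1 ^ (d2 - i)))"

lemma cpoly_deg:
  assumes "degree A1 \<le> d1" "degree B1 \<le> d1"
  shows "degree (cpoly d2 H A1 B1) \<le> d1 * d2"
  unfolding cpoly_def
proof (rule degree_sum_le)
  fix i assume i: "i \<in> {..d2}"
  have "degree (smult (coeff H i) (A1 ^ i * B1 ^ (d2 - i))) \<le> degree (A1 ^ i * B1 ^ (d2 - i))"
    by (rule degree_smult_le)
  also have "\<dots> \<le> degree (A1 ^ i) + degree (B1 ^ (d2 - i))" by (rule degree_mult_le)
  also have "\<dots> \<le> d1 * i + d1 * (d2 - i)"
    using degree_power_le[of A1 i] degree_power_le[of B1 "d2 - i"] assms
    by (meson add_mono le_trans mult_le_mono1 mult.commute[of d1])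
  also have "\<dots> = d1 * d2" using i by (simp add: add_mult_distrib2[symmetric])
  finally show "degree (smult (coeff H i) (A1 ^ i * B1 ^ (d2 - i))) \<le> d1 * d2" .
qed simp

lemma cpoly_hom:
  assumes "degree A1 \<le> d1" "degree B1 \<le> d1" "degree H \<le> d2"
  shows "hom (d1 * d2) (cpoly d2 H A1 B1) x y = hom d2 H (hom d1 A1 x y) (hom d1 B1 x y)"
proof -
  have "hom (d1 * d2) (cpoly d2 H A1 B1) x y =
      (\<Sum>i\<le>d2. coeff H i * hom (d1 * d2) (A1 ^ i * B1 ^ (d2 - i)) x y)"
    unfolding cpoly_def by (simp add: hom_sum hom_smult)
  also have "\<dots> = (\<Sum>i\<le>d2. coeff H i * (hom d1 A1 x y) ^ i * (hom d1 B1 x y) ^ (d2 - i))"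
  proof (rule sum.cong)
    fix i assume i: "i \<in> {..d2}"
    have e: "d1 * d2 = d1 * i + d1 * (d2 - i)" using i by (simp add: add_mult_distrib2[symmetric])
    have da: "degree (A1 ^ i) \<le> d1 * i"
      using degree_power_le[of A1 i] assms by (metis le_trans mult_le_mono1 mult.commute)
    have db: "degree (B1 ^ (d2 - i)) \<le> d1 * (d2 - i)"
      using degree_power_le[of B1 "d2 - i"] assms by (metis le_trans mult_le_mono1 mult.commute)
    have "hom (d1 * d2) (A1 ^ i * B1 ^ (d2 - i)) x y
        = hom (d1 * i) (A1 ^ i) x y * hom (d1 * (d2 - i)) (B1 ^ (d2 - i)) x y"
      unfolding e by (rule hom_mult[OF da db])
    also have "\<dots> = (hom d1 A1 x y) ^ i * (hom d1 B1 x y) ^ (d2 - i)"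
      using hom_pow assms by simp
    finally show "coeff H i * hom (d1 * d2) (A1 ^ i * B1 ^ (d2 - i)) x y =
       coeff H i * hom d1 A1 x y ^ i * hom d1 B1 x y ^ (d2 - i)" by simp
  qed simp
  also have "\<dots> = hom d2 H (hom d1 A1 x y) (hom d1 B1 x y)"
    by (rule hom_expand[OF assms(3), symmetric])
  finally show ?thesis .
qed

lemma repr_comp:
  assumes f: "repr f d1 A1 B1" and g: "repr g d2 A2 B2"
  shows "repr (g \<circ> f) (d1 * d2) (cpoly d2 A2 A1 B1) (cpoly d2 B2 A1 B1)"
proof -
  have dA1: "degree A1 \<le> d1" and dB1: "degree B1 \<le> d1" using f by (auto simp: repr_def)
  have dA2: "degree A2 \<le> d2" and dB2: "degree B2 \<le> d2" using g by (auto simp: repr_def)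
  show ?thesis
    unfolding repr_def
  proof (intro conjI allI impI)
    show "degree (cpoly d2 A2 A1 B1) \<le> d1 * d2" by (rule cpoly_deg[OF dA1 dB1])
    show "degree (cpoly d2 B2 A1 B1) \<le> d1 * d2" by (rule cpoly_deg[OF dA1 dB1])
  next
    fix x y :: complex assume nz: "(x, y) \<noteq> (0, 0)"
    define u where "u = hom d1 A1 x y"
    define v where "v = hom d1 B1 x y"
    have uv: "(u, v) \<noteq> (0, 0)" and fe: "f (sph x y) = sph u v"
      using f nz by (auto simp: repr_def u_def v_def)
    have nc: "\<not> (hom d2 A2 u v = 0 \<and> hom d2 B2 u v = 0)" and ge: "g (sph u v) = sph (hom d2 A2 u v) (hom d2 B2 u v)"
      using g uv by (auto simp: repr_def)
    have h1: "hom (d1 * d2) (cpoly d2 A2 A1 B1) x y = hom d2 A2 u v"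
      unfolding u_def v_def by (rule cpoly_hom[OF dA1 dB1 dA2])
    have h2: "hom (d1 * d2) (cpoly d2 B2 A1 B1) x y = hom d2 B2 u v"
      unfolding u_def v_def by (rule cpoly_hom[OF dA1 dB1 dB2])
    show "\<not> (hom (d1 * d2) (cpoly d2 A2 A1 B1) x y = 0 \<and> hom (d1 * d2) (cpoly d2 B2 A1 B1) x y = 0)"
      using nc h1 h2 by simp
    show "(g \<circ> f) (sph x y) = sph (hom (d1 * d2) (cpoly d2 A2 A1 B1) x y) (hom (d1 * d2) (cpoly d2 B2 A1 B1) x y)"
      using fe ge h1 h2 by simp
  qed
qed

lemma repr_id: "repr id 1 [:0, 1:] 1"
  unfolding repr_def by (auto simp: hom_def)

lemma poly_root_dvd_unit:
  fixes p q :: "complex poly"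
  assumes "coprime p q" "poly p a = 0" "poly q a = 0"
  shows False
proof -
  have "[:-a, 1:] dvd p" "[:-a, 1:] dvd q" using assms by (simp_all add: poly_eq_0_iff_dvd)
  then have "is_unit [:-a, 1:]" using assms(1) coprime_common_divisor by blast
  then show False by (simp add: is_unit_iff_degree)
qed

lemma repr_rat:
  fixes p q :: "complex poly"
  assumes cp: "coprime p q"
  shows "repr (rat_eval p q) (rat_degree p q) p q"
  unfolding repr_def
proof (intro conjI allI impI)
  define d where "d = rat_degree p q"
  show "degree p \<le> rat_degree p q" "degree q \<le> rat_degree p q" by (auto simp: rat_degree_def)
  fix x y :: complex assume nz: "(x, y) \<noteq> (0, 0)"
  show "\<not> (hom (rat_degree p q) p x y = 0 \<and> hom (rat_degree p q) q x y = 0)"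
  proof
    assume h: "hom (rat_degree p q) p x y = 0 \<and> hom (rat_degree p q) q x y = 0"
    show False
    proof (cases "y = 0")
      case True
      then have x: "x \<noteq> 0" using nz by simp
      have c: "coeff p d = 0" "coeff q d = 0" using h True x by (auto simp: hom_def d_def)
      have "p = 0 \<and> q = 0"
      proof (cases "degree p \<le> degree q")
        case True
        then have "d = degree q" by (simp add: d_def rat_degree_def)
        then have "q = 0" using c by simp
        moreover have "d = 0" using \<open>d = degree q\<close> \<open>q = 0\<close> by simp
        ultimately show ?thesis using True c by (metis degree_0 le_zero_eq leading_coeff_0_iff)
      next
        case False
        then have "d = degree p" by (simp add: d_def rat_degree_def)
        then have "p = 0" using c by simp
        then show ?thesis using False by simp
      qed
      then show False using cp by simp
    next
      case False
      then have "poly p (x / y) = 0" "poly q (x / y) = 0" using h by (auto simp: hom_def)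
      then show False using poly_root_dvd_unit[OF cp] by blast
    qed
  qed
  show "rat_eval p q (sph x y) = sph (hom (rat_degree p q) p x y) (hom (rat_degree p q) q x y)"
  proof (cases "y = 0")
    case True
    then have x: "x \<noteq> 0" using nz by simp
    then show ?thesis using True
      by (simp add: sph_def hom_def rat_eval_def rat_degree_def Let_def)
  next
    case False
    then show ?thesis
      by (simp add: sph_def hom_def rat_eval_def)
  qed
qed

lemma compose_seq_snoc: "compose_seq g (js @ [j]) = g j \<circ> compose_seq g js"
  by (simp add: compose_seq_def)

lemma compose_seq_repr:
  assumes "\<And>j. j \<in> set js \<Longrightarrow> repr (g j) (dg j) (A j) (B j)"
  shows "\<exists>a b. repr (compose_seq g js) (prod_list (map dg js)) a b"
  using assms
proof (induction js rule: rev_induct)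
  case Nil
  then show ?case using repr_id by (auto simp: compose_seq_def id_def)
next
  case (snoc j js)
  then obtain a b where "repr (compose_seq g js) (prod_list (map dg js)) a b" by auto
  from repr_comp[OF this snoc.prems[of j]] show ?case
    unfolding compose_seq_snoc by (simp del: comp_apply) blast
qed


lemma repr_Some:
  assumes "repr f d A B"
  shows "f (Some z) = sph (poly A z) (poly B z)" "\<not> (poly A z = 0 \<and> poly B z = 0)"
proof -
  have "(z, 1::complex) \<noteq> (0, 0)" by simp
  then have "f (sph z 1) = sph (hom d A z 1) (hom d B z 1)"
    "\<not> (hom d A z 1 = 0 \<and> hom d B z 1 = 0)" using assms unfolding repr_def by blast+
  then show "f (Some z) = sph (poly A z) (poly B z)" "\<not> (poly A z = 0 \<and> poly B z = 0)"
    by (simp_all add: sph_def hom_def)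
qed

lemma repr_None:
  assumes "repr f d A B"
  shows "f None = sph (coeff A d) (coeff B d)"
proof -
  have "(1::complex, 0::complex) \<noteq> (0, 0)" by simp
  then have "f (sph 1 0) = sph (hom d A 1 0) (hom d B 1 0)" using assms unfolding repr_def by blast
  then show ?thesis by (simp add: sph_def hom_def)
qed

lemma repr_rep_bound:
  assumes r: "repr f d A B"
  shows "finite {x. repelling_fixed_point f x} \<and> card {x. repelling_fixed_point f x} \<le> d + 1"
proof -
  have dA: "degree A \<le> d" and dB: "degree B \<le> d" using r by (auto simp: repr_def)
  define R where "R = pCons 0 B - A"
  have polyR: "poly R z = z * poly B z - poly A z" for z by (simp add: R_def)
  show ?thesis
  proof (cases "R = 0")
    case True
    then have AB: "poly A z = z * poly B z" for z using polyR[of z] by simp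
    have Bnz: "poly B z \<noteq> 0" for z using repr_Some(2)[OF r, of z] AB[of z] by auto
    have fid: "f (Some z) = Some z" for z
      using repr_Some(1)[OF r, of z] AB[of z] Bnz[of z] by (simp add: sph_def)
    have "\<not> repelling_fixed_point f x" for x
    proof
      assume rp: "repelling_fixed_point f x"
      then obtain m where fx: "f x = x" and
        dm: "((\<lambda>w. to_coord x (f (from_coord x w))) has_field_derivative m) (at (to_coord x x))"
        and nm: "norm m > 1" unfolding repelling_fixed_point_def by blast
      have "(\<lambda>w. to_coord x (f (from_coord x w))) = (\<lambda>w. w)"
      proof
        fix w show "to_coord x (f (from_coord x w)) = w"
          using fx fid by (cases x) (auto simp: to_coord_def from_coord_def)
      qed
      then have "((\<lambda>w. w) has_field_derivative m) (at (to_coord x x))" using dm by simp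
      moreover have "((\<lambda>w. w) has_field_derivative 1) (at (to_coord x x))" by (rule DERIV_ident)
      ultimately have "m = 1" by (rule DERIV_unique)
      then show False using nm by simp
    qed
    then show ?thesis by simp
  next
    case False
    have degR: "degree R \<le> d + 1" unfolding R_def
    proof (rule degree_diff_le)
      show "degree (pCons 0 B) \<le> d + 1" using dB degree_pCons_le[of 0 B] by linarith
      show "degree A \<le> d + 1" using dA by linarith
    qed
    have cR: "coeff R (d + 1) = coeff B d" unfolding R_def using dA by (simp add: coeff_eq_0)
    define Z where "Z = {z. poly R z = 0}"
    have finZ: "finite Z" unfolding Z_def using False by (rule poly_roots_finite)
    have cardZ: "card Z \<le> degree R" unfolding Z_def using False by (rule card_poly_roots_bound)
    define S where "S = Some ` Z \<union> (if coeff B d = 0 then {None} else {})"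
    have sub: "{x. repelling_fixed_point f x} \<subseteq> S"
    proof
      fix x assume "x \<in> {x. repelling_fixed_point f x}"
      then have fx: "f x = x" by (simp add: repelling_fixed_point_def)
      show "x \<in> S"
      proof (cases x)
        case None
        then have "coeff B d = 0" using fx repr_None[OF r] by (auto simp: sph_def split: if_splits)
        then show ?thesis using None by (simp add: S_def)
      next
        case (Some z)
        then have "sph (poly A z) (poly B z) = Some z" using fx repr_Some(1)[OF r, of z] by simp
        then have "poly B z \<noteq> 0" "poly A z / poly B z = z" by (auto simp: sph_def split: if_splits)
        then have "poly R z = 0" using polyR[of z] by (simp add: field_simps)
        then show ?thesis using Some by (simp add: S_def Z_def)
      qed
    qed
    have finS: "finite S" using finZ by (simp add: S_def)
    have "card S \<le> d + 1"
    proof (cases "coeff B d = 0")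
      case True
      have "degree R \<noteq> d + 1" using cR True False by (metis leading_coeff_0_iff)
      then have "degree R \<le> d" using degR by simp
      have "card S \<le> card (Some ` Z) + card {None :: sphere}" unfolding S_def using True
        by (metis card_Un_le)
      also have "\<dots> \<le> card Z + 1" using card_image_le[OF finZ, of Some] by simp
      finally show ?thesis using cardZ \<open>degree R \<le> d\<close> by linarith
    next
      case c: False
      have "card S \<le> card Z" unfolding S_def using c card_image_le[OF finZ, of Some] by simp
      then show ?thesis using cardZ degR by linarith
    qed
    then show ?thesis using sub finS by (meson card_mono finite_subset le_trans)
  qed
qed

lemma sum_prod_lists:
  fixes dg :: "nat \<Rightarrow> nat"
  assumes "finite A"
  shows "(\<Sum>js\<in>{js. set js \<subseteq> A \<and> length js = n}. prod_list (map dg js)) = (\<Sum>j\<in>A. dg j) ^ n"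
proof (induction n)
  case 0
  have "{js. set js \<subseteq> A \<and> length js = 0} = {[]}" by auto
  then show ?case by simp
next
  case (Suc n)
  let ?L = "\<lambda>n. {js. set js \<subseteq> A \<and> length js = n}"
  have eq: "?L (Suc n) = (\<lambda>(j, js). j # js) ` (A \<times> ?L n)"
  proof
    show "?L (Suc n) \<subseteq> (\<lambda>(j, js). j # js) ` (A \<times> ?L n)"
    proof
      fix xs assume "xs \<in> ?L (Suc n)"
      then obtain j js where "xs = j # js" "j \<in> A" "js \<in> ?L n" by (cases xs) auto
      then show "xs \<in> (\<lambda>(j, js). j # js) ` (A \<times> ?L n)" by force
    qed
  qed auto
  have inj: "inj_on (\<lambda>(j, js). j # js) (A \<times> ?L n)" by (auto simp: inj_on_def)
  have "(\<Sum>js\<in>?L (Suc n). prod_list (map dg js))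
      = (\<Sum>p\<in>A \<times> ?L n. prod_list (map dg ((\<lambda>(j, js). j # js) p)))"
    unfolding eq by (rule sum.reindex[OF inj, unfolded comp_def])
  also have "\<dots> = (\<Sum>j\<in>A. \<Sum>js\<in>?L n. dg j * prod_list (map dg js))"
    by (simp add: sum.cartesian_product split_def)
  also have "\<dots> = (\<Sum>j\<in>A. dg j) * (\<Sum>js\<in>?L n. prod_list (map dg js))"
    by (simp add: sum_distrib_left sum_distrib_right sum.swap[of _ A])
  finally show ?case using Suc by simp
qed


theorem mainTheorem7:
  fixes P Q :: "nat \<Rightarrow> complex poly" and N n D :: nat
  assumes "\<And>j. j < N \<Longrightarrow> coprime (P j) (Q j)"
    and "D = (\<Sum>j<N. rat_degree (P j) (Q j))"
    and "n \<ge> 1"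
  shows "finite (repelling_pts_mult (\<lambda>j. rat_eval (P j) (Q j)) N n)
    \<and> card (repelling_pts_mult (\<lambda>j. rat_eval (P j) (Q j)) N n) \<le> D ^ n + N ^ n"
proof -
  define g where "g = (\<lambda>j. rat_eval (P j) (Q j))"
  define dg where "dg = (\<lambda>j. rat_degree (P j) (Q j))"
  define L where "L = {js. set js \<subseteq> {..<N} \<and> length js = n}"
  define F where "F = (\<lambda>js. (\<lambda>x. (x, js)) ` {x. repelling_fixed_point (compose_seq g js) x})"
  have finL: "finite L" unfolding L_def by (rule finite_lists_length_eq) simp
  have bnd: "finite (F js) \<and> card (F js) \<le> prod_list (map dg js) + 1" if "js \<in> L" for js
  proof -
    have "\<And>j. j \<in> set js \<Longrightarrow> repr (g j) (dg j) (P j) (Q j)"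
      using that assms(1) repr_rat unfolding L_def g_def dg_def by auto
    then obtain a b where "repr (compose_seq g js) (prod_list (map dg js)) a b"
      using compose_seq_repr by blast
    from repr_rep_bound[OF this] show ?thesis unfolding F_def
      using card_image_le le_trans by blast
  qed
  have eq: "repelling_pts_mult g N n = (\<Union>js\<in>L. F js)"
    unfolding repelling_pts_mult_def L_def F_def by auto
  have fin: "finite (\<Union>js\<in>L. F js)" using finL bnd by blast
  have "card (\<Union>js\<in>L. F js) \<le> (\<Sum>js\<in>L. card (F js))" by (rule card_UN_le[OF finL])
  also have "\<dots> \<le> (\<Sum>js\<in>L. prod_list (map dg js) + 1)" by (rule sum_mono) (use bnd in blast)
  also have "\<dots> = (\<Sum>js\<in>L. prod_list (map dg js)) + card L" by (simp only: sum.distrib) simp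
  also have "\<dots> = D ^ n + N ^ n"
    unfolding L_def using sum_prod_lists[of "{..<N}" dg n] card_lists_length_eq[of "{..<N}" n]
    by (simp add: assms(2) dg_def)
  finally show ?thesis using eq fin unfolding g_def by simp
qed

end
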